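(* Let $L_1,L_2$ be positive integers that are both multiples of $4$. Consider the honeycomb lattice on the $L_1\times L_2$ torus: sites $A(\bm R),B(\bm R)$ with $\bm R=m_1\bm a_1+m_2\bm a_2$, $m_\mu\in\mathbb Z/L_\mu\mathbb Z$, and bonds $A(\bm R)$–$B(\bm R)$ of type $c$, $A(\bm R)$–$B(\bm R-\bm a_1)$ of type $a$, $A(\bm R)$–$B(\bm R-\bm a_2)$ of type $b$. Assign to every bond of type $\alpha$ the link matrix $U_{ij}=U_{ji}=U^\alpha$ with $U^a=\tau^y\otimes I_2$, $U^b=-\tau^x\otimes\sigma^z$, $U^c=-\tau^x\otimes\sigma^y$. Let $C_1$ be the noncontractible loop $A(\bm 0)\to B(\bm 0)\to A(\bm a_1)\to B(\bm a_1)\to\cdots\to A(L_1\bm a_1)=A(\bm 0)$ (alternating $c$- and $a$-bonds) and $C_2$ the noncontractible loop $A(\bm 0)\to B(\bm 0)\to A(\bm a_2)\to\cdots\to A(\bm 0)$ (alternating $c$- and $b$-bonds). Then the ordered products of link matrices along $C_1$ and along $C_2$ both equal $I_4$, every elementary hexagon has product $-I_4$, and there exist unitary matrices $g_j$ and signs $\eta_{ij}=\eta_{ji}\in\{\pm1\}$ with $g_iU_{ij}g_j^\dagger=\eta_{ij}I_4$ for every bond of the torus, such that the Hubbard model $-\frac{t}{\sqrt3}\sum_{\langle ij\rangle}\psi_i^\dagger U_{ij}\psi_j+h.c.+\frac U2\sum_j\psi_j^\dagger\psi_j(\psi_j^\dagger\psi_j-1)$ is mapped by $\psi_j\to g_j\psi_j$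 to an explicitly $\mathrm{SU}(4)$-symmetric $\pi$-flux Hubbard model with $\prod_{\langle ij\rangle\in p}\eta_{ij}=-1$ for every hexagon $p$ and $\prod_{\langle ij\rangle\in C_\mu}\eta_{ij}=+1$ for $\mu=1,2$.
   Context: Pauli matrices $\boldsymbol\tau$ act on the first and $\boldsymbol\sigma$ on the second factor of $\mathbb C^2\otimes\mathbb C^2$; $t,U$ are real; $\psi_j$ are four-component fermionic spinors. A gauge transformation acts by $\psi_j\to g_j\psi_j$, $U_{ij}\to g_iU_{ij}g_j^\dagger$. *)

theory Defs
  imports Complex_Main "Jordan_Normal_Form.Schur_Decomposition"
begin

definition pauli_x :: "complex mat" where
  "pauli_x = mat_of_rows_list 2 [[0, 1], [1, 0]]"
definition pauli_y :: "complex mat" where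
  "pauli_y = mat_of_rows_list 2 [[0, - \<i>], [\<i>, 0]]"
definition pauli_z :: "complex mat" where
  "pauli_z = mat_of_rows_list 2 [[1, 0], [0, -1]]"

definition kron :: "complex mat \<Rightarrow> complex mat \<Rightarrow> complex mat" where
  "kron A B = mat (dim_row A * dim_row B) (dim_col A * dim_col B)
     (\<lambda>(i, j). A $$ (i div dim_row B, j div dim_col B) * B $$ (i mod dim_row B, j mod dim_col B))"

definition Ua :: "complex mat" where "Ua = kron pauli_y (1\<^sub>m 2)"
definition Ub :: "complex mat" where "Ub = - kron pauli_x pauli_z"
definition Uc :: "complex mat" where "Uc = - kron pauli_x pauli_y"

definition unitary4 :: "complex mat \<Rightarrow> bool" where
  "unitary4 g \<longleftrightarrow> g \<in> carrier_mat 4 4 \<and> g * mat_adjoint g = 1\<^sub>m 4 \<and> mat_adjoint g * g = 1\<^sub>m 4"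

datatype sublat = SA | SB
datatype btype = Ta | Tb | Tc

text \<open>A site is (sublattice, m1, m2) with m_mu taken modulo L_mu (representative in [0, L_mu)).\<close>
type_synonym site = "sublat \<times> int \<times> int"

definition siteA :: "nat \<Rightarrow> nat \<Rightarrow> int \<Rightarrow> int \<Rightarrow> site" where
  "siteA L1 L2 m1 m2 = (SA, m1 mod int L1, m2 mod int L2)"
definition siteB :: "nat \<Rightarrow> nat \<Rightarrow> int \<Rightarrow> int \<Rightarrow> site" where
  "siteB L1 L2 m1 m2 = (SB, m1 mod int L1, m2 mod int L2)"

definition is_bond :: "nat \<Rightarrow> nat \<Rightarrow> btype \<Rightarrow> site \<Rightarrow> site \<Rightarrow> bool" where
  "is_bond L1 L2 \<alpha> i j \<longleftrightarrow> (\<exists>m1 m2.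
     let a = siteA L1 L2 m1 m2;
         b = (case \<alpha> of Tc \<Rightarrow> siteB L1 L2 m1 m2
                      | Ta \<Rightarrow> siteB L1 L2 (m1 - 1) m2
                      | Tb \<Rightarrow> siteB L1 L2 m1 (m2 - 1))
     in (i = a \<and> j = b) \<or> (i = b \<and> j = a))"

definition bond :: "nat \<Rightarrow> nat \<Rightarrow> site \<Rightarrow> site \<Rightarrow> bool" where
  "bond L1 L2 i j \<longleftrightarrow> (\<exists>\<alpha>. is_bond L1 L2 \<alpha> i j)"

definition Umat :: "btype \<Rightarrow> complex mat" where
  "Umat \<alpha> = (case \<alpha> of Ta \<Rightarrow> Ua | Tb \<Rightarrow> Ub | Tc \<Rightarrow> Uc)"

definition path_prod :: "(site \<Rightarrow> site \<Rightarrow> complex mat) \<Rightarrow> site list \<Rightarrow> complex mat" where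
  "path_prod U p = foldr (\<lambda>(i, j) acc. U i j * acc) (zip p (tl p)) (1\<^sub>m 4)"

definition path_sign :: "(site \<Rightarrow> site \<Rightarrow> int) \<Rightarrow> site list \<Rightarrow> int" where
  "path_sign \<eta> p = prod_list (map (\<lambda>(i, j). \<eta> i j) (zip p (tl p)))"

definition loopC1 :: "nat \<Rightarrow> nat \<Rightarrow> site list" where
  "loopC1 L1 L2 = concat (map (\<lambda>k. [siteA L1 L2 (int k) 0, siteB L1 L2 (int k) 0]) [0..<L1])
                  @ [siteA L1 L2 0 0]"

definition loopC2 :: "nat \<Rightarrow> nat \<Rightarrow> site list" where
  "loopC2 L1 L2 = concat (map (\<lambda>k. [siteA L1 L2 0 (int k), siteB L1 L2 0 (int k)]) [0..<L2])
                  @ [siteA L1 L2 0 0]"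

text \<open>Elementary hexagon attached to the unit cell R = (m1, m2):
  A(R) -c- B(R) -a- A(R+a1) -b- B(R+a1-a2) -c- A(R+a1-a2) -a- B(R-a2) -b- A(R).
  Every elementary hexagon of the torus is of this form for exactly one R.\<close>
definition hexagon :: "nat \<Rightarrow> nat \<Rightarrow> int \<Rightarrow> int \<Rightarrow> site list" where
  "hexagon L1 L2 m1 m2 =
     [siteA L1 L2 m1 m2, siteB L1 L2 m1 m2, siteA L1 L2 (m1 + 1) m2,
      siteB L1 L2 (m1 + 1) (m2 - 1), siteA L1 L2 (m1 + 1) (m2 - 1),
      siteB L1 L2 m1 (m2 - 1), siteA L1 L2 m1 m2]"

end

theory Submission
  imports Defs
begin
lemma lt4D: "(i::nat) < 4 \<Longrightarrow> i = 0 \<or> i = 1 \<or> i = 2 \<or> i = 3" by auto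
lemma lt4D': "(i::nat) < Suc (Suc (Suc (Suc 0))) \<Longrightarrow> i = 0 \<or> i = 1 \<or> i = 2 \<or> i = 3" by auto
lemma lt4: "(i::nat) < 4 \<longleftrightarrow> i = 0 \<or> i = 1 \<or> i = 2 \<or> i = 3" by auto
lemma mult4: "mat_of_rows_list 4 [[a00, a01, a02, a03], [a10, a11, a12, a13], [a20, a21, a22, a23], [a30, a31, a32, a33]] * mat_of_rows_list 4 [[b00, b01, b02, b03], [b10, b11, b12, b13], [b20, b21, b22, b23], [b30, b31, b32, b33]] = mat_of_rows_list 4 [[(a00 * b00 + a01 * b10 + a02 * b20 + a03 * b30), (a00 * b01 + a01 * b11 + a02 * b21 + a03 * b31), (a00 * b02 + a01 * b12 + a02 * b22 + a03 * b32), (a00 * b03 + a01 * b13 + a02 * b23 + a03 * b33)], [(a10 * b00 + a11 * b10 + a12 * b20 + a13 * b30), (a10 * b01 + a11 * b11 + a12 * b21 + a13 * b31), (a10 * b02 + a11 * b12 + a12 * b22 + a13 * b32), (a10 * b03 + a11 * b13 + a12 * b23 + a13 * b33)], [(a20 * b00 + a21 * b10 + a22 * b20 + a23 * b30), (a20 * b01 + a21 * b11 + a22 * b21 + a23 * b31), (a20 * b02 + a21 * b12 + a22 * b22 + a23 * b32), (a20 * b03 + a21 * b13 + a22 * b23 + a23 * b33)], [(a30 * b00 + a31 * b10 + a32 * b20 + a33 * b30), (a30 * b01 + a31 * b11 + a32 * b21 + a33 * b31), (a30 * b02 + a31 * b12 + a32 * b22 + a33 * b32), (a30 * b03 + a31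 * b13 + a32 * b23 + a33 * b33)]]"
  by (rule eq_matI) (auto simp: mat_of_rows_list_def scalar_prod_def less_Suc_eq numeral_eq_Suc sum.atLeast0_lessThan_Suc)
lemma adj4: "mat_adjoint (mat_of_rows_list 4 [[a00, a01, a02, a03], [a10, a11, a12, a13], [a20, a21, a22, a23], [a30, a31, a32, a33]]) = mat_of_rows_list 4 [[cnj a00, cnj a10, cnj a20, cnj a30], [cnj a01, cnj a11, cnj a21, cnj a31], [cnj a02, cnj a12, cnj a22, cnj a32], [cnj a03, cnj a13, cnj a23, cnj a33]]"
  by (rule eq_matI) (auto simp: mat_adjoint_def mat_of_rows_list_def mat_of_rows_def less_Suc_eq numeral_eq_Suc)
lemma smult4: "(c::complex) \<cdot>\<^sub>m (mat_of_rows_list 4 [[a00, a01, a02, a03], [a10, a11, a12, a13], [a20, a21, a22, a23], [a30, a31, a32, a33]]) = mat_of_rows_list 4 [[c * a00, c * a01, c * a02, c * a03], [c * a10, c * a11, c * a12, c * a13], [c * a20, c * a21, c * a22, c * a23], [c * a30, c * a31, c * a32, c * a33]]"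
  by (rule eq_matI) (auto simp: mat_of_rows_list_def less_Suc_eq numeral_eq_Suc)
lemma neg4: "- (mat_of_rows_list 4 [[a00, a01, a02, a03], [a10, a11, a12, a13], [a20, a21, a22, a23], [a30, a31, a32, a33]]) = (mat_of_rows_list 4 [[- a00, - a01, - a02, - a03], [- a10, - a11, - a12, - a13], [- a20, - a21, - a22, - a23], [- a30, - a31, - a32, - a33]] :: complex mat)"
  by (rule eq_matI) (auto simp: mat_of_rows_list_def less_Suc_eq numeral_eq_Suc)
lemma one4: "(1\<^sub>m 4 :: complex mat) = mat_of_rows_list 4 [[1, 0, 0, 0], [0, 1, 0, 0], [0, 0, 1, 0], [0, 0, 0, 1]]"
  by (rule eq_matI) (auto simp: mat_of_rows_list_def less_Suc_eq numeral_eq_Suc)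

lemma Ua_eq: "Ua = mat_of_rows_list 4 [[0, 0, - \<i>, 0], [0, 0, 0, - \<i>], [\<i>, 0, 0, 0], [0, \<i>, 0, 0]]"
  by (rule eq_matI) (auto simp: Ua_def kron_def pauli_y_def mat_of_rows_list_def numeral_2_eq_2[symmetric] dest!: lt4D lt4D')
lemma Ub_eq: "Ub = mat_of_rows_list 4 [[0, 0, -1, 0], [0, 0, 0, 1], [-1, 0, 0, 0], [0, 1, 0, 0]]"
  by (rule eq_matI) (auto simp: Ub_def kron_def pauli_x_def pauli_z_def mat_of_rows_list_def numeral_2_eq_2[symmetric] dest!: lt4D lt4D')
lemma Uc_eq: "Uc = mat_of_rows_list 4 [[0, 0, 0, \<i>], [0, 0, - \<i>, 0], [0, \<i>, 0, 0], [- \<i>, 0, 0, 0]]"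
  by (rule eq_matI) (auto simp: Uc_def kron_def pauli_x_def pauli_y_def mat_of_rows_list_def numeral_2_eq_2[symmetric] dest!: lt4D lt4D')
definition Xm :: "complex mat" where "Xm = mat_of_rows_list 4 [[0, - \<i>, 0, 0], [\<i>, 0, 0, 0], [0, 0, 0, \<i>], [0, 0, - \<i>, 0]]"
definition Ym :: "complex mat" where "Ym = mat_of_rows_list 4 [[0, 1, 0, 0], [1, 0, 0, 0], [0, 0, 0, 1], [0, 0, 1, 0]]"
definition ph :: "int \<Rightarrow> complex" where
  "ph n = (if n mod 4 = 0 then 1 else if n mod 4 = 1 then \<i> else if n mod 4 = 2 then -1 else - \<i>)"
definition G :: "int \<Rightarrow> int \<Rightarrow> complex mat" where
  "G r1 r2 = ph (r1 + r2) \<cdot>\<^sub>m ((if even r1 then 1\<^sub>m 4 else Xm) * (if even r2 then 1\<^sub>m 4 else Ym))"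
lemma r4: "0 \<le> (r::int) \<Longrightarrow> r < 4 \<Longrightarrow> r = 0 \<or> r = 1 \<or> r = 2 \<or> r = 3" by auto
lemmas msimps = Ua_eq Ub_eq Uc_eq Xm_def Ym_def G_def ph_def mult4 adj4 smult4 one4 neg4
lemma keyA: "0 \<le> r1 \<Longrightarrow> r1 < 4 \<Longrightarrow> 0 \<le> r2 \<Longrightarrow> r2 < 4 \<Longrightarrow>
   G r1 r2 * Ua * mat_adjoint (G ((r1 - 1) mod 4) r2 * Uc) = (if even r2 then -1 else 1) \<cdot>\<^sub>m 1\<^sub>m 4
 \<and> G ((r1 - 1) mod 4) r2 * Uc * Ua * mat_adjoint (G r1 r2) = (if even r2 then -1 else 1) \<cdot>\<^sub>m 1\<^sub>m 4"
  apply (drule r4, assumption) apply (drule r4, assumption)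
  apply (elim disjE) by (simp_all add: msimps)

lemma keyB: "0 \<le> r1 \<Longrightarrow> r1 < 4 \<Longrightarrow> 0 \<le> r2 \<Longrightarrow> r2 < 4 \<Longrightarrow>
   G r1 r2 * Ub * mat_adjoint (G r1 ((r2 - 1) mod 4) * Uc) = 1 \<cdot>\<^sub>m 1\<^sub>m 4
 \<and> G r1 ((r2 - 1) mod 4) * Uc * Ub * mat_adjoint (G r1 r2) = 1 \<cdot>\<^sub>m 1\<^sub>m 4"
  apply (drule r4, assumption) apply (drule r4, assumption)
  apply (elim disjE) by (simp_all add: msimps)
lemma keyC: "0 \<le> r1 \<Longrightarrow> r1 < 4 \<Longrightarrow> 0 \<le> r2 \<Longrightarrow> r2 < 4 \<Longrightarrow>
   G r1 r2 * Uc * mat_adjoint (G r1 r2 * Uc) = 1 \<cdot>\<^sub>m 1\<^sub>m 4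
 \<and> G r1 r2 * Uc * Uc * mat_adjoint (G r1 r2) = 1 \<cdot>\<^sub>m 1\<^sub>m 4"
  apply (drule r4, assumption) apply (drule r4, assumption)
  apply (elim disjE) by (simp_all add: msimps)
lemma car4: "mat_of_rows_list 4 [[a00, a01, a02, a03], [a10, a11, a12, a13], [a20, a21, a22, a23], [a30, a31, a32, a33]] \<in> carrier_mat 4 4" unfolding mat_of_rows_list_def carrier_mat_def by (simp add: eval_nat_numeral)
lemma keyU: "0 \<le> r1 \<Longrightarrow> r1 < 4 \<Longrightarrow> 0 \<le> r2 \<Longrightarrow> r2 < 4 \<Longrightarrow>
   unitary4 (G r1 r2) \<and> unitary4 (G r1 r2 * Uc)"
  apply (drule r4, assumption) apply (drule r4, assumption)
  apply (elim disjE) by (simp_all add: msimps unitary4_def car4)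
lemma hexM: "Uc * (Ua * (Ub * (Uc * (Ua * (Ub * 1\<^sub>m 4))))) = - 1\<^sub>m 4"
  by (simp add: msimps)
lemma fp4: "(f ^^ 4) x = f (f (f (f x)))" by (simp add: numeral_eq_Suc)
lemma c1M: "((\<lambda>P. Uc * (Ua * P)) ^^ 4) (1\<^sub>m 4) = 1\<^sub>m 4"
  by (simp only: fp4) (simp add: msimps)
lemma c2M: "((\<lambda>P. Uc * (Ub * P)) ^^ 4) (1\<^sub>m 4) = 1\<^sub>m 4"
  by (simp only: fp4) (simp add: msimps)

lemma pp_one: "path_prod U [a] = 1\<^sub>m 4" by (simp add: path_prod_def)
lemma pp_cons2: "path_prod U (a # b # r) = U a b * path_prod U (b # r)" by (simp add: path_prod_def)
lemma ps_one: "path_sign e [a] = 1" by (simp add: path_sign_def)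
lemma ps_cons2: "path_sign e (a # b # r) = e a b * path_sign e (b # r)" by (simp add: path_sign_def)

lemma blocks_ex: "\<exists>r. concat (map (\<lambda>k. [x k, y k]) [Suc m..<Suc m+n]) @ [x (Suc m+n)] = x (Suc m) # r"
  by (cases n) (auto simp: upt_rec)

lemma blocks_prod:
  assumes "\<And>k. U (x k) (y k) = A" "\<And>k. U (y k) (x (Suc k)) = B"
  shows "path_prod U (concat (map (\<lambda>k. [x k, y k]) [m..<m+n]) @ [x (m+n)]) = ((\<lambda>P. A * (B * P)) ^^ n) (1\<^sub>m 4)"
proof (induction n arbitrary: m)
  case 0 show ?case by (simp add: path_prod_def)
next
  case (Suc n)
  obtain r where r: "concat (map (\<lambda>k. [x k, y k]) [Suc m..<Suc m+n]) @ [x (Suc m+n)] = x (Suc m) # r"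
    using blocks_ex by blast
  have e: "[m..<m+Suc n] = m # [Suc m..<Suc m+n]" by (simp add: upt_rec)
  have "path_prod U (concat (map (\<lambda>k. [x k, y k]) [m..<m+Suc n]) @ [x (m+Suc n)])
      = path_prod U (x m # y m # (concat (map (\<lambda>k. [x k, y k]) [Suc m..<Suc m+n]) @ [x (Suc m+n)]))"
    unfolding e by (simp del: upt_Suc)
  also have "\<dots> = A * (B * path_prod U (concat (map (\<lambda>k. [x k, y k]) [Suc m..<Suc m+n]) @ [x (Suc m+n)]))"
    unfolding r pp_cons2 using assms by simp
  also have "\<dots> = A * (B * ((\<lambda>P. A * (B * P)) ^^ n) (1\<^sub>m 4))" using Suc.IH[of "Suc m"] by simp
  finally show ?case by simp
qed

lemma blocks_sign:
  assumes "\<And>k. e (x k) (y k) = a" "\<And>k. e (y k) (x (Suc k)) = b"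
  shows "path_sign e (concat (map (\<lambda>k. [x k, y k]) [m..<m+n]) @ [x (m+n)]) = (a * b) ^ n"
proof (induction n arbitrary: m)
  case 0 show ?case by (simp add: path_sign_def)
next
  case (Suc n)
  obtain r where r: "concat (map (\<lambda>k. [x k, y k]) [Suc m..<Suc m+n]) @ [x (Suc m+n)] = x (Suc m) # r"
    using blocks_ex by blast
  have e: "[m..<m+Suc n] = m # [Suc m..<Suc m+n]" by (simp add: upt_rec)
  have "path_sign e (concat (map (\<lambda>k. [x k, y k]) [m..<m+Suc n]) @ [x (m+Suc n)])
      = path_sign e (x m # y m # (concat (map (\<lambda>k. [x k, y k]) [Suc m..<Suc m+n]) @ [x (Suc m+n)]))"
    unfolding e by (simp del: upt_Suc)
  also have "\<dots> = a * (b * path_sign e (concat (map (\<lambda>k. [x k, y k]) [Suc m..<Suc m+n]) @ [x (Suc m+n)]))"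
    unfolding r ps_cons2 using assms by simp
  also have "\<dots> = a * (b * (a * b) ^ n)" using Suc.IH[of "Suc m"] by simp
  finally show ?case by simp
qed

lemma funpow4: "(f ^^ 4) x = x \<Longrightarrow> (f ^^ (4 * q)) x = x"
proof (induction q)
  case 0 then show ?case by simp
next
  case (Suc q)
  have "(f ^^ (4 * Suc q)) x = (f ^^ 4) ((f ^^ (4 * q)) x)" by (simp add: funpow_add)
  then show ?case using Suc by simp
qed

lemma modne: "2 \<le> L \<Longrightarrow> (a::int) mod L \<noteq> (a + 1) mod L"
proof
  assume "2 \<le> L" "a mod L = (a + 1) mod L"
  then have "L dvd (a + 1) - a" by (metis mod_eq_dvd_iff)
  then have "L dvd 1" by simp
  with \<open>2 \<le> L\<close> show False using zdvd_imp_le by fastforce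
qed

lemma even_mod_int: "2 dvd L \<Longrightarrow> even ((a::int) mod L) \<longleftrightarrow> even a"
  by (metis even_iff_mod_2_eq_zero mod_mod_cancel)

lemma bc: "is_bond L1 L2 Tc (siteA L1 L2 m1 m2) (siteB L1 L2 m1 m2)"
  unfolding is_bond_def Let_def by (rule exI[of _ m1], rule exI[of _ m2]) simp
lemma bcr: "is_bond L1 L2 Tc (siteB L1 L2 m1 m2) (siteA L1 L2 m1 m2)"
  unfolding is_bond_def Let_def by (rule exI[of _ m1], rule exI[of _ m2]) simp
lemma ba: "is_bond L1 L2 Ta (siteA L1 L2 (m1 + 1) m2) (siteB L1 L2 m1 m2)"
  unfolding is_bond_def Let_def by (rule exI[of _ "m1 + 1"], rule exI[of _ m2]) simp
lemma bar: "is_bond L1 L2 Ta (siteB L1 L2 m1 m2) (siteA L1 L2 (m1 + 1) m2)"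
  unfolding is_bond_def Let_def by (rule exI[of _ "m1 + 1"], rule exI[of _ m2]) simp
lemma bb: "is_bond L1 L2 Tb (siteA L1 L2 m1 (m2 + 1)) (siteB L1 L2 m1 m2)"
  unfolding is_bond_def Let_def by (rule exI[of _ m1], rule exI[of _ "m2 + 1"]) simp
lemma bbr: "is_bond L1 L2 Tb (siteB L1 L2 m1 m2) (siteA L1 L2 m1 (m2 + 1))"
  unfolding is_bond_def Let_def by (rule exI[of _ m1], rule exI[of _ "m2 + 1"]) simp

definition eta :: "site \<Rightarrow> site \<Rightarrow> int" where
  "eta i j = (if snd (snd i) = snd (snd j) \<and> fst (snd i) \<noteq> fst (snd j)
              then (if even (snd (snd i)) then -1 else 1) else 1)"
definition gg :: "site \<Rightarrow> complex mat" where
  "gg i = (case fst i of SA \<Rightarrow> G (fst (snd i) mod 4) (snd (snd i) mod 4)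
                      | SB \<Rightarrow> G (fst (snd i) mod 4) (snd (snd i) mod 4) * Uc)"

lemma eta_sym: "eta i j = eta j i" by (auto simp: eta_def)
lemma eta_pm: "eta i j \<in> {1, -1}" by (auto simp: eta_def)
lemma gg_unit: "unitary4 (gg j)"
  using keyU[of "fst (snd j) mod 4" "snd (snd j) mod 4"] by (auto simp: gg_def split: sublat.splits)

lemma gA: "4 dvd int L1 \<Longrightarrow> 4 dvd int L2 \<Longrightarrow> gg (siteA L1 L2 m1 m2) = G (m1 mod 4) (m2 mod 4)"
  by (simp add: gg_def siteA_def mod_mod_cancel)
lemma gB: "4 dvd int L1 \<Longrightarrow> 4 dvd int L2 \<Longrightarrow> gg (siteB L1 L2 m1 m2) = G (m1 mod 4) (m2 mod 4) * Uc"
  by (simp add: gg_def siteB_def mod_mod_cancel)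

lemma bondTa:
  assumes d1: "4 dvd int L1" and d2: "4 dvd int L2" and l1: "2 \<le> int L1"
  shows "gg (siteA L1 L2 m1 m2) * Ua * mat_adjoint (gg (siteB L1 L2 (m1-1) m2))
           = of_int (eta (siteA L1 L2 m1 m2) (siteB L1 L2 (m1-1) m2)) \<cdot>\<^sub>m 1\<^sub>m 4
       \<and> gg (siteB L1 L2 (m1-1) m2) * Ua * mat_adjoint (gg (siteA L1 L2 m1 m2))
           = of_int (eta (siteB L1 L2 (m1-1) m2) (siteA L1 L2 m1 m2)) \<cdot>\<^sub>m 1\<^sub>m 4"
proof -
  have k: "G (m1 mod 4) (m2 mod 4) * Ua * mat_adjoint (G ((m1 - 1) mod 4) (m2 mod 4) * Uc) = (if even (m2 mod 4) then -1 else 1) \<cdot>\<^sub>m 1\<^sub>m 4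
 \<and> G ((m1 - 1) mod 4) (m2 mod 4) * Uc * Ua * mat_adjoint (G (m1 mod 4) (m2 mod 4)) = (if even (m2 mod 4) then -1 else 1) \<cdot>\<^sub>m 1\<^sub>m 4"
    using keyA[of "m1 mod 4" "m2 mod 4"] by (simp add: mod_diff_left_eq)
  have ne: "(m1 - 1) mod int L1 \<noteq> m1 mod int L1" using modne[OF l1, of "m1 - 1"] by simp
  have ev: "even (m2 mod int L2) \<longleftrightarrow> even (m2 mod 4)"
    using d2 even_mod_int[of "int L2" m2] even_mod_int[of 4 m2] by (metis dvd_trans even_numeral)
  have e1: "eta (siteA L1 L2 m1 m2) (siteB L1 L2 (m1-1) m2) = (if even (m2 mod 4) then -1 else 1)"
    using ne ev by (auto simp: eta_def siteA_def siteB_def)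
  have e2: "eta (siteB L1 L2 (m1-1) m2) (siteA L1 L2 m1 m2) = (if even (m2 mod 4) then -1 else 1)"
    using ne ev by (auto simp: eta_def siteA_def siteB_def)
  show ?thesis using k by (simp add: gA[OF d1 d2] gB[OF d1 d2] e1 e2)
qed

lemma bondTb:
  assumes d1: "4 dvd int L1" and d2: "4 dvd int L2" and l2: "2 \<le> int L2"
  shows "gg (siteA L1 L2 m1 m2) * Ub * mat_adjoint (gg (siteB L1 L2 m1 (m2-1)))
           = of_int (eta (siteA L1 L2 m1 m2) (siteB L1 L2 m1 (m2-1))) \<cdot>\<^sub>m 1\<^sub>m 4
       \<and> gg (siteB L1 L2 m1 (m2-1)) * Ub * mat_adjoint (gg (siteA L1 L2 m1 m2))
           = of_int (eta (siteB L1 L2 m1 (m2-1)) (siteA L1 L2 m1 m2)) \<cdot>\<^sub>m 1\<^sub>m 4"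
proof -
  have k: "G (m1 mod 4) (m2 mod 4) * Ub * mat_adjoint (G (m1 mod 4) ((m2 - 1) mod 4) * Uc) = 1 \<cdot>\<^sub>m 1\<^sub>m 4
 \<and> G (m1 mod 4) ((m2 - 1) mod 4) * Uc * Ub * mat_adjoint (G (m1 mod 4) (m2 mod 4)) = 1 \<cdot>\<^sub>m 1\<^sub>m 4"
    using keyB[of "m1 mod 4" "m2 mod 4"] by (simp add: mod_diff_left_eq)
  have ne: "(m2 - 1) mod int L2 \<noteq> m2 mod int L2" using modne[OF l2, of "m2 - 1"] by simp
  have e1: "eta (siteA L1 L2 m1 m2) (siteB L1 L2 m1 (m2-1)) = 1"
    using ne by (auto simp: eta_def siteA_def siteB_def)
  have e2: "eta (siteB L1 L2 m1 (m2-1)) (siteA L1 L2 m1 m2) = 1"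
    using ne by (auto simp: eta_def siteA_def siteB_def)
  show ?thesis using k by (simp add: gA[OF d1 d2] gB[OF d1 d2] e1 e2)
qed

lemma bondTc:
  assumes d1: "4 dvd int L1" and d2: "4 dvd int L2"
  shows "gg (siteA L1 L2 m1 m2) * Uc * mat_adjoint (gg (siteB L1 L2 m1 m2))
           = of_int (eta (siteA L1 L2 m1 m2) (siteB L1 L2 m1 m2)) \<cdot>\<^sub>m 1\<^sub>m 4
       \<and> gg (siteB L1 L2 m1 m2) * Uc * mat_adjoint (gg (siteA L1 L2 m1 m2))
           = of_int (eta (siteB L1 L2 m1 m2) (siteA L1 L2 m1 m2)) \<cdot>\<^sub>m 1\<^sub>m 4"
proof -
  have k: "G (m1 mod 4) (m2 mod 4) * Uc * mat_adjoint (G (m1 mod 4) (m2 mod 4) * Uc) = 1 \<cdot>\<^sub>m 1\<^sub>m 4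
 \<and> G (m1 mod 4) (m2 mod 4) * Uc * Uc * mat_adjoint (G (m1 mod 4) (m2 mod 4)) = 1 \<cdot>\<^sub>m 1\<^sub>m 4"
    using keyC[of "m1 mod 4" "m2 mod 4"] by simp
  have e1: "eta (siteA L1 L2 m1 m2) (siteB L1 L2 m1 m2) = 1" by (simp add: eta_def siteA_def siteB_def)
  have e2: "eta (siteB L1 L2 m1 m2) (siteA L1 L2 m1 m2) = 1" by (simp add: eta_def siteA_def siteB_def)
  show ?thesis using k by (simp add: gA[OF d1 d2] gB[OF d1 d2] e1 e2)
qed
theorem mainTheorem4:
  fixes L1 L2 :: nat and U :: "site \<Rightarrow> site \<Rightarrow> complex mat"
  assumes "L1 > 0" and "L2 > 0" and "4 dvd L1" and "4 dvd L2"
    and links: "\<And>\<alpha> i j. is_bond L1 L2 \<alpha> i j \<Longrightarrow> U i j = Umat \<alpha>"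
  shows "path_prod U (loopC1 L1 L2) = 1\<^sub>m 4
       \<and> path_prod U (loopC2 L1 L2) = 1\<^sub>m 4
       \<and> (\<forall>m1 m2. path_prod U (hexagon L1 L2 m1 m2) = - 1\<^sub>m 4)
       \<and> (\<exists>(g :: site \<Rightarrow> complex mat) (\<eta> :: site \<Rightarrow> site \<Rightarrow> int).
            (\<forall>j. unitary4 (g j))
          \<and> (\<forall>i j. bond L1 L2 i j \<longrightarrow>
                 \<eta> i j = \<eta> j i \<and> \<eta> i j \<in> {1, -1}
               \<and> g i * U i j * mat_adjoint (g j) = of_int (\<eta> i j) \<cdot>\<^sub>m 1\<^sub>m 4)
          \<and> (\<forall>m1 m2. path_sign \<eta> (hexagon L1 L2 m1 m2) = -1)
          \<and> path_sign \<eta> (loopC1 L1 L2) = 1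
          \<and> path_sign \<eta> (loopC2 L1 L2) = 1)"
proof -
  have d1: "4 dvd int L1" using assms(3) by (metis int_dvd_int_iff of_nat_numeral)
  have d2: "4 dvd int L2" using assms(4) by (metis int_dvd_int_iff of_nat_numeral)
  have l1: "2 \<le> int L1" using assms(1,3) dvd_imp_le by fastforce
  have l2: "2 \<le> int L2" using assms(2,4) dvd_imp_le by fastforce
  obtain q1 where q1: "L1 = 4 * q1" using assms(3) by blast
  obtain q2 where q2: "L2 = 4 * q2" using assms(4) by blast
  have UA: "\<And>i j. is_bond L1 L2 Ta i j \<Longrightarrow> U i j = Ua" using links by (simp add: Umat_def)
  have UB: "\<And>i j. is_bond L1 L2 Tb i j \<Longrightarrow> U i j = Ub" using links by (simp add: Umat_def)
  have UC: "\<And>i j. is_bond L1 L2 Tc i j \<Longrightarrow> U i j = Uc" using links by (simp add: Umat_def)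
  define x1 where "x1 k = siteA L1 L2 (int k) 0" for k
  define y1 where "y1 k = siteB L1 L2 (int k) 0" for k
  have lc1: "loopC1 L1 L2 = concat (map (\<lambda>k. [x1 k, y1 k]) [0..<0+L1]) @ [x1 (0+L1)]"
    by (simp add: loopC1_def x1_def y1_def siteA_def)
  have c1a: "U (x1 k) (y1 k) = Uc" for k unfolding x1_def y1_def by (rule UC[OF bc])
  have c1b: "U (y1 k) (x1 (Suc k)) = Ua" for k using UA[OF bar[of L1 L2 "int k" 0]] by (simp add: x1_def y1_def add.commute)
  have P1: "path_prod U (loopC1 L1 L2) = 1\<^sub>m 4"
  proof -
    have "path_prod U (loopC1 L1 L2) = ((\<lambda>P. Uc * (Ua * P)) ^^ L1) (1\<^sub>m 4)"
      unfolding lc1 by (rule blocks_prod[of U x1 y1, OF c1a c1b])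
    also have "\<dots> = 1\<^sub>m 4" using funpow4[OF c1M, of q1] q1 by simp
    finally show ?thesis .
  qed
  have s1a: "eta (x1 k) (y1 k) = 1" for k by (simp add: eta_def x1_def y1_def siteA_def siteB_def add.commute)
  have s1b: "eta (y1 k) (x1 (Suc k)) = -1" for k
    using modne[OF l1, of "int k"] by (simp add: eta_def x1_def y1_def siteA_def siteB_def add.commute)
  have S1: "path_sign eta (loopC1 L1 L2) = 1"
  proof -
    have "even L1" using assms(3) by (metis dvd_trans even_numeral)
    then show ?thesis unfolding lc1 blocks_sign[of eta x1 y1, OF s1a s1b] by simp
  qed
  define x2 where "x2 k = siteA L1 L2 0 (int k)" for k
  define y2 where "y2 k = siteB L1 L2 0 (int k)" for k
  have lc2: "loopC2 L1 L2 = concat (map (\<lambda>k. [x2 k, y2 k]) [0..<0+L2]) @ [x2 (0+L2)]"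
    by (simp add: loopC2_def x2_def y2_def siteA_def)
  have c2a: "U (x2 k) (y2 k) = Uc" for k unfolding x2_def y2_def by (rule UC[OF bc])
  have c2b: "U (y2 k) (x2 (Suc k)) = Ub" for k using UB[OF bbr[of L1 L2 0 "int k"]] by (simp add: x2_def y2_def add.commute)
  have P2: "path_prod U (loopC2 L1 L2) = 1\<^sub>m 4"
  proof -
    have "path_prod U (loopC2 L1 L2) = ((\<lambda>P. Uc * (Ub * P)) ^^ L2) (1\<^sub>m 4)"
      unfolding lc2 by (rule blocks_prod[of U x2 y2, OF c2a c2b])
    also have "\<dots> = 1\<^sub>m 4" using funpow4[OF c2M, of q2] q2 by simp
    finally show ?thesis .
  qed
  have s2a: "eta (x2 k) (y2 k) = 1" for k by (simp add: eta_def x2_def y2_def siteA_def siteB_def add.commute)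
  have s2b: "eta (y2 k) (x2 (Suc k)) = 1" for k
    using modne[OF l2, of "int k"] by (simp add: eta_def x2_def y2_def siteA_def siteB_def add.commute)
  have S2: "path_sign eta (loopC2 L1 L2) = 1"
    unfolding lc2 blocks_sign[of eta x2 y2, OF s2a s2b] by simp
  have PH: "path_prod U (hexagon L1 L2 m1 m2) = - 1\<^sub>m 4" for m1 m2
  proof -
    have h1: "U (siteA L1 L2 m1 m2) (siteB L1 L2 m1 m2) = Uc" by (rule UC[OF bc])
    have h2: "U (siteB L1 L2 m1 m2) (siteA L1 L2 (m1 + 1) m2) = Ua" by (rule UA[OF bar])
    have h3: "U (siteA L1 L2 (m1 + 1) m2) (siteB L1 L2 (m1 + 1) (m2 - 1)) = Ub"
      using UB[OF bb[of L1 L2 "m1 + 1" "m2 - 1"]] by simp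
    have h4: "U (siteB L1 L2 (m1 + 1) (m2 - 1)) (siteA L1 L2 (m1 + 1) (m2 - 1)) = Uc" by (rule UC[OF bcr])
    have h5: "U (siteA L1 L2 (m1 + 1) (m2 - 1)) (siteB L1 L2 m1 (m2 - 1)) = Ua" by (rule UA[OF ba])
    have h6: "U (siteB L1 L2 m1 (m2 - 1)) (siteA L1 L2 m1 m2) = Ub"
      using UB[OF bbr[of L1 L2 m1 "m2 - 1"]] by simp
    show ?thesis unfolding hexagon_def pp_cons2 pp_one h1 h2 h3 h4 h5 h6 by (rule hexM)
  qed
  have SH: "path_sign eta (hexagon L1 L2 m1 m2) = -1" for m1 m2
  proof -
    have ne1: "m1 mod int L1 \<noteq> (m1 + 1) mod int L1" by (rule modne[OF l1])
    have ne2: "(m2 - 1) mod int L2 \<noteq> m2 mod int L2" using modne[OF l2, of "m2 - 1"] by simp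
    have ev: "even (a mod int L2) \<longleftrightarrow> even a" for a
      using d2 even_mod_int[of "int L2" a] by (metis dvd_trans even_numeral)
    show ?thesis unfolding hexagon_def ps_cons2 ps_one
      using ne1 ne2 ev[of m2] ev[of "m2 - 1"] by (cases "even m2") (auto simp: eta_def siteA_def siteB_def)
  qed
  have GB: "\<forall>i j. bond L1 L2 i j \<longrightarrow>
                 eta i j = eta j i \<and> eta i j \<in> {1, -1}
               \<and> gg i * U i j * mat_adjoint (gg j) = of_int (eta i j) \<cdot>\<^sub>m 1\<^sub>m 4"
  proof (intro allI impI conjI)
    fix i j assume b: "bond L1 L2 i j"
    show "eta i j = eta j i" by (rule eta_sym)
    show "eta i j \<in> {1, -1}" by (rule eta_pm)
    from b obtain \<alpha> where ib: "is_bond L1 L2 \<alpha> i j" unfolding bond_def by blast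
    then obtain m1 m2 where mm: "let a = siteA L1 L2 m1 m2;
         b = (case \<alpha> of Tc \<Rightarrow> siteB L1 L2 m1 m2
                      | Ta \<Rightarrow> siteB L1 L2 (m1 - 1) m2
                      | Tb \<Rightarrow> siteB L1 L2 m1 (m2 - 1))
     in (i = a \<and> j = b) \<or> (i = b \<and> j = a)" unfolding is_bond_def by blast
    have Uij: "U i j = Umat \<alpha>" by (rule links[OF ib])
    show "gg i * U i j * mat_adjoint (gg j) = of_int (eta i j) \<cdot>\<^sub>m 1\<^sub>m 4"
    proof (cases \<alpha>)
      case Ta
      then show ?thesis using mm Uij bondTa[OF d1 d2 l1, of m1 m2] by (auto simp: Umat_def Let_def)
    next
      case Tb
      then show ?thesis using mm Uij bondTb[OF d1 d2 l2, of m1 m2] by (auto simp: Umat_def Let_def)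
    next
      case Tc
      then show ?thesis using mm Uij bondTc[OF d1 d2, of m1 m2] by (auto simp: Umat_def Let_def)
    qed
  qed
  show ?thesis
    using P1 P2 PH S1 S2 SH GB gg_unit by blast
qed

end
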